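(* Assume (H1), (H2.1)–(H2.4), (H3.1), (H3.2) and (H3.3). Then $\|\widehat{T}_{N}-T|_{\widehat{X}}\|_{\widehat{X}\leftarrow\widehat{X}}\to 0$ as $N\to\infty$.
   Context: Let $d\ge 1$ be an integer and $\tau>0$, $h\ge\tau$ real. $X$, $X^{+}$, $X^{\pm}$ are real normed spaces of functions $[-\tau,0]\to\mathbb{R}^{d}$, $[0,h]\to\mathbb{R}^{d}$, $[-\tau,h]\to\mathbb{R}^{d}$, respectively. For a function $u$ on $[-\tau,h]$, $u_{h}(\theta):=u(h+\theta)$, $\theta\in[-\tau,0]$. $V\colon X\times X^{+}\to X^{\pm}$ and $\mathcal{F}_{s}\colon X^{\pm}\to X^{+}$ are linear with $V(\phi,z)|_{[-\tau,0]}=\phi$; $V^{-}\phi:=V(\phi,0_{X^{+}})$, $V^{+}z:=V(0_{X},z)$. The operator $T\colon X\to X$ is $T\phi:=V(\phi,z^{\ast})_{h}$, where $z^{\ast}\in X^{+}$ is the unique solution of $z=\mathcal{F}_{s}V(\phi,z)$. Let $\widetilde{X}^{+}\subseteq X^{+}$ be a linear subspace; for $N\in\mathbb{N}$, $X_{N}^{+}$ is finite-dimensional, $R_{N}^{+}\colon\widetilde{X}^{+}\to X_{N}^{+}$, $P_{N}^{+}\colon X_{N}^{+}\to X^{+}$ are linear with $R_{N}^{+}P_{N}^{+}=I_{X_{N}^{+}}$, $\mathcal{L}_{N}^{+}:=P_{N}^{+}R_{N}^{+}$, and $\Pi_{N}^{+}$ is the range of $P_{N}^{+}$. Hypotheses: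 (H1) $I_{X^{+}}-\mathcal{F}_{s}V^{+}$ is invertible on $X^{+}$ with bounded inverse and for each $\phi\in X$ the equation $z=\mathcal{F}_{s}V(\phi,z)$ has a unique solution in $X^{+}$. There is a linear subspace $\widehat{X}^{+}\subseteq\widetilde{X}^{+}$ with a norm $\|\cdot\|_{\widehat{X}^{+}}$ making it complete such that: (H2.1) $\|(\mathcal{L}_{N}^{+}-I_{X^{+}})|_{\widehat{X}^{+}}\|_{X^{+}\leftarrow\widehat{X}^{+}}\to 0$ as $N\to\infty$; (H2.2) $\Pi_{N}^{+}\subseteq\widehat{X}^{+}$ for all $N$; (H2.3) there is $\hat{c}_{1}>0$ with $\|\cdot\|_{X^{+}}\le\hat{c}_{1}\|\cdot\|_{\widehat{X}^{+}}$ on $\widehat{X}^{+}$; (H2.4) the range of $\mathcal{F}_{s}V^{+}$ is contained in $\widehat{X}^{+}$ and $\mathcal{F}_{s}V^{+}\colon X^{+}\to\widehat{X}^{+}$ is bounded. There is a linear subspace $\widehat{X}\subseteq X$ with a norm $\|\cdot\|_{\widehat{X}}$ making it complete such that: (H3.1) $\mathcal{F}_{s}V^{-}$ maps $\widehat{X}$ into $\widehat{X}^{+}$ and $\mathcal{F}_{s}V^{-}|_{\widehat{X}}\colon\widehat{X}\to\widehat{X}^{+}$ is bounded; (H3.2) $V(\phi,z)_{h}\in\widehat{X}$ for all $(\phi,z)\in\widehat{X}\times\widehat{X}^{+}$; (H3.3) there is $\hat{c}_{2}>0$ with $\|(V^{+}z)_{h}\|_{\widehat{X}}\le\hat{c}_{2}\|z\|_{X^{+}}$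 for all $z\in\widehat{X}^{+}$. For $N$ large enough that $I_{X^{+}}-\mathcal{L}_{N}^{+}\mathcal{F}_{s}V^{+}$ is invertible on $X^{+}$, the operator $\widehat{T}_{N}\colon\widehat{X}\to\widehat{X}$ is $\widehat{T}_{N}\phi:=V(\phi,w^{\ast})_{h}$, where $w^{\ast}\in X^{+}$ is the unique solution of $z=\mathcal{L}_{N}^{+}\mathcal{F}_{s}V(\phi,z)$. *)

theory Defs
  imports "HOL-Analysis.Analysis"
begin

text \<open>Functions [a,b] -> R^d are represented as total functions real => real^'d
  that vanish outside [a,b] (canonical zero extension). Vector operations are pointwise.\<close>

type_synonym 'd fn = "real \<Rightarrow> real ^ 'd"

definition fzero :: "('d::finite) fn" where "fzero = (\<lambda>t. 0)"
definition fadd :: "('d::finite) fn \<Rightarrow> 'd fn \<Rightarrow> 'd fn" where "fadd u v = (\<lambda>t. u t + v t)"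
definition fscale :: "real \<Rightarrow> ('d::finite) fn \<Rightarrow> 'd fn" where "fscale c u = (\<lambda>t. c *\<^sub>R u t)"
definition fdiff :: "('d::finite) fn \<Rightarrow> 'd fn \<Rightarrow> 'd fn" where "fdiff u v = (\<lambda>t. u t - v t)"

definition lin_subspace :: "('d::finite) fn set \<Rightarrow> bool" where
  "lin_subspace S \<longleftrightarrow> fzero \<in> S \<and> (\<forall>u\<in>S. \<forall>v\<in>S. fadd u v \<in> S) \<and> (\<forall>c. \<forall>u\<in>S. fscale c u \<in> S)"

definition is_norm_on :: "('d::finite) fn set \<Rightarrow> ('d fn \<Rightarrow> real) \<Rightarrow> bool" where
  "is_norm_on S nrm \<longleftrightarrow>
     (\<forall>u\<in>S. 0 \<le> nrm u) \<and> (\<forall>u\<in>S. nrm u = 0 \<longleftrightarrow> u = fzero) \<and>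
     (\<forall>c. \<forall>u\<in>S. nrm (fscale c u) = \<bar>c\<bar> * nrm u) \<and>
     (\<forall>u\<in>S. \<forall>v\<in>S. nrm (fadd u v) \<le> nrm u + nrm v)"

definition fun_normed_space :: "real \<Rightarrow> real \<Rightarrow> ('d::finite) fn set \<Rightarrow> ('d fn \<Rightarrow> real) \<Rightarrow> bool" where
  "fun_normed_space a b S nrm \<longleftrightarrow>
     (\<forall>u\<in>S. \<forall>t. t \<notin> {a..b} \<longrightarrow> u t = 0) \<and> lin_subspace S \<and> is_norm_on S nrm"

definition complete_on :: "('d::finite) fn set \<Rightarrow> ('d fn \<Rightarrow> real) \<Rightarrow> bool" where
  "complete_on S nrm \<longleftrightarrow>
     (\<forall>x::nat \<Rightarrow> 'd fn. (\<forall>n. x n \<in> S) \<longrightarrow>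
        (\<forall>e>0. \<exists>M. \<forall>m\<ge>M. \<forall>n\<ge>M. nrm (fdiff (x m) (x n)) < e) \<longrightarrow>
        (\<exists>y\<in>S. (\<lambda>n. nrm (fdiff (x n) y)) \<longlonglongrightarrow> 0))"

definition lin_on :: "('d::finite) fn set \<Rightarrow> ('d fn \<Rightarrow> ('e::finite) fn) \<Rightarrow> bool" where
  "lin_on S L \<longleftrightarrow> (\<forall>u\<in>S. \<forall>v\<in>S. L (fadd u v) = fadd (L u) (L v)) \<and>
                   (\<forall>c. \<forall>u\<in>S. L (fscale c u) = fscale c (L u))"

definition maps_into :: "'a set \<Rightarrow> 'b set \<Rightarrow> ('a \<Rightarrow> 'b) \<Rightarrow> bool" where
  "maps_into S1 S2 L \<longleftrightarrow> (\<forall>x\<in>S1. L x \<in> S2)"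

definition bounded_op :: "'a set \<Rightarrow> ('a \<Rightarrow> real) \<Rightarrow> ('b \<Rightarrow> real) \<Rightarrow> ('a \<Rightarrow> 'b) \<Rightarrow> bool" where
  "bounded_op S1 n1 n2 L \<longleftrightarrow> (\<exists>K. \<forall>x\<in>S1. n2 (L x) \<le> K * n1 x)"

text \<open>Operator norm (meaningful for bounded operators).\<close>
definition op_norm :: "'a set \<Rightarrow> ('a \<Rightarrow> real) \<Rightarrow> ('b \<Rightarrow> real) \<Rightarrow> ('a \<Rightarrow> 'b) \<Rightarrow> real" where
  "op_norm S1 n1 n2 L = Sup ((\<lambda>x. n2 (L x)) ` {x\<in>S1. n1 x \<le> 1})"

text \<open>The operator norms of a sequence of operators tend to 0 (the operators being
  bounded for all large N, so that the norms are defined).\<close>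
definition op_norm_to_zero :: "'a set \<Rightarrow> ('a \<Rightarrow> real) \<Rightarrow> ('b \<Rightarrow> real) \<Rightarrow> (nat \<Rightarrow> 'a \<Rightarrow> 'b) \<Rightarrow> bool" where
  "op_norm_to_zero S1 n1 n2 L \<longleftrightarrow>
     eventually (\<lambda>N. bounded_op S1 n1 n2 (L N)) sequentially \<and>
     (\<lambda>N. op_norm S1 n1 n2 (L N)) \<longlonglongrightarrow> 0"

definition shift :: "real \<Rightarrow> real \<Rightarrow> ('d::finite) fn \<Rightarrow> 'd fn" where
  "shift tau h u = (\<lambda>\<theta>. if \<theta> \<in> {-tau..0} then u (h + \<theta>) else 0)"

definition opT :: "real \<Rightarrow> real \<Rightarrow> ('d::finite) fn set \<Rightarrow> ('d fn \<Rightarrow> 'd fn \<Rightarrow> 'd fn) \<Rightarrow> ('d fn \<Rightarrow> 'd fn)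
                   \<Rightarrow> 'd fn \<Rightarrow> 'd fn" where
  "opT tau h Xp V Fs \<phi> = shift tau h (V \<phi> (THE z. z \<in> Xp \<and> z = Fs (V \<phi> z)))"

definition opTN :: "real \<Rightarrow> real \<Rightarrow> ('d::finite) fn set \<Rightarrow> ('d fn \<Rightarrow> 'd fn \<Rightarrow> 'd fn) \<Rightarrow> ('d fn \<Rightarrow> 'd fn)
                   \<Rightarrow> ('d fn \<Rightarrow> 'd fn) \<Rightarrow> 'd fn \<Rightarrow> 'd fn" where
  "opTN tau h Xp V Fs LN \<phi> = shift tau h (V \<phi> (THE w. w \<in> Xp \<and> w = LN (Fs (V \<phi> w))))"

end

theory Submission
  imports Defs "HOL-Library.Function_Algebras"
begin

lemma fd_surj:
  fixes g :: "'n::real_vector \<Rightarrow> 'n" and M B :: "'n set"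
  assumes sub: "subspace M" and fin: "finite B" and spanB: "span B = M"
   and into: "\<forall>x\<in>M. g x \<in> M"
   and add: "\<forall>x\<in>M. \<forall>y\<in>M. g (x+y) = g x + g y" and sc: "\<forall>c. \<forall>x\<in>M. g (c *\<^sub>R x) = c *\<^sub>R g x"
   and inj0: "\<forall>x\<in>M. g x = 0 \<longrightarrow> x = 0"
   and y: "y \<in> M"
  shows "\<exists>x\<in>M. g x = y"
proof -
  obtain C where C: "C \<subseteq> M" "independent C" "M \<subseteq> span C" "card C = dim M" by (rule basis_exists)
  have finC: "finite C" using independent_span_bound[OF fin C(2)] C(1) spanB by auto
  have spC: "span C = M" using C(1,3) sub span_minimal by blast
  obtain g' where g': "linear g'" "\<forall>x\<in>C. g' x = g x" using linear_independent_extend[OF C(2)] by blast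
  have g0: "g 0 = 0" using sc sub subspace_0[OF sub] by (metis scale_zero_left)
  have "x \<in> M \<and> g' x = g x" if "x \<in> M" for x
  proof (rule span_induct[of x C "\<lambda>x. x \<in> M \<and> g' x = g x"])
    show "x \<in> span C" using that spC by simp
    show "subspace {x \<in> M. g' x = g x}"
      unfolding subspace_def using sub g0 add sc g'(1)
      by (auto simp: subspace_def linear_0 linear_add linear_scale)
    show "\<And>x. x \<in> C \<Longrightarrow> x \<in> M \<and> g' x = g x" using g'(2) C(1) by auto
  qed
  then have eq: "\<forall>x\<in>M. g' x = g x" by blast
  have inj: "inj_on g' (span C)"
  proof (rule inj_onI)
    fix a b assume ab: "a \<in> span C" "b \<in> span C" "g' a = g' b"
    then have "g' (a - b) = 0" using g'(1) by (simp add: linear_diff)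
    moreover have "a - b \<in> M" using ab spC sub by (simp add: subspace_diff)
    ultimately show "a = b" using eq inj0 by auto
  qed
  have ind: "independent (g' ` C)" using real_vector.linear_independent_injective_image[OF g'(1) C(2) inj] by simp
  have card: "card (g' ` C) = card C" using card_image inj span_superset inj_on_subset by metis
  have sub2: "g' ` C \<subseteq> M" using g'(2) C(1) into by auto
  have "M \<subseteq> span (g' ` C)"
  proof
    fix v assume v: "v \<in> M"
    show "v \<in> span (g' ` C)"
    proof (rule ccontr)
      assume nv: "v \<notin> span (g' ` C)"
      then have i2: "independent (insert v (g' ` C))" using ind by (simp add: independent_insert)
      have "insert v (g' ` C) \<subseteq> span C" using v sub2 spC by auto
      then have "card (insert v (g' ` C)) \<le> card C"
        using independent_span_bound[OF finC i2] by auto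
      moreover have "v \<notin> g' ` C" using nv span_superset by blast
      ultimately show False using card finC by simp
    qed
  qed
  also have "\<dots> = g' ` span C" using span_linear_image[OF g'(1)] by simp
  finally obtain x where "x \<in> span C" "y = g' x" using y by auto
  then show ?thesis using spC eq by auto
qed

lemma fops[simp]: "fadd u v = u + v" "fdiff u v = u - v" "fzero = 0"
  by (auto simp: fadd_def fdiff_def fzero_def fun_eq_iff)

lemma fscale_simps[simp]:
  "fscale c (u + v) = fscale c u + fscale c v" "fscale 0 u = 0" "fscale 1 u = u"
  "fscale (-1) u = - u" "fscale c 0 = 0" "fscale c (u - v) = fscale c u - fscale c v"
  by (auto simp: fscale_def fun_eq_iff algebra_simps)

lemma ls_0: "lin_subspace S \<Longrightarrow> 0 \<in> S"
  by (simp add: lin_subspace_def)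
lemma ls_add: "lin_subspace S \<Longrightarrow> u \<in> S \<Longrightarrow> v \<in> S \<Longrightarrow> u + v \<in> S"
  by (simp add: lin_subspace_def)
lemma ls_scale: "lin_subspace S \<Longrightarrow> u \<in> S \<Longrightarrow> fscale c u \<in> S"
  by (simp add: lin_subspace_def)
lemma ls_neg: "lin_subspace S \<Longrightarrow> u \<in> S \<Longrightarrow> - u \<in> S"
  using ls_scale[of S u "-1"] by simp
lemma ls_diff: "lin_subspace S \<Longrightarrow> u \<in> S \<Longrightarrow> v \<in> S \<Longrightarrow> u - v \<in> S"
  using ls_add[of S u "- v"] ls_neg[of S v] by simp

lemma nrm_nonneg: "is_norm_on S n \<Longrightarrow> u \<in> S \<Longrightarrow> 0 \<le> n u"
  by (simp add: is_norm_on_def)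
lemma nrm_0: "is_norm_on S n \<Longrightarrow> lin_subspace S \<Longrightarrow> n 0 = 0"
  using ls_0 by (fastforce simp: is_norm_on_def)
lemma nrm_eq0: "is_norm_on S n \<Longrightarrow> u \<in> S \<Longrightarrow> n u = 0 \<Longrightarrow> u = 0"
  by (simp add: is_norm_on_def)
lemma nrm_scale: "is_norm_on S n \<Longrightarrow> u \<in> S \<Longrightarrow> n (fscale c u) = \<bar>c\<bar> * n u"
  by (simp add: is_norm_on_def)
lemma nrm_add: "is_norm_on S n \<Longrightarrow> u \<in> S \<Longrightarrow> v \<in> S \<Longrightarrow> n (u + v) \<le> n u + n v"
  by (simp add: is_norm_on_def)
lemma nrm_neg: "is_norm_on S n \<Longrightarrow> u \<in> S \<Longrightarrow> n (- u) = n u"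
  using nrm_scale[of S n u "-1"] by simp
lemma nrm_diff: "is_norm_on S n \<Longrightarrow> lin_subspace S \<Longrightarrow> u \<in> S \<Longrightarrow> v \<in> S \<Longrightarrow> n (u - v) \<le> n u + n v"
  using nrm_add[of S n u "- v"] nrm_neg[of S n v] ls_neg[of S v] by simp

lemma lo_add: "lin_on S L \<Longrightarrow> u \<in> S \<Longrightarrow> v \<in> S \<Longrightarrow> L (u + v) = L u + L v"
  by (simp add: lin_on_def)
lemma lo_scale: "lin_on S L \<Longrightarrow> u \<in> S \<Longrightarrow> L (fscale c u) = fscale c (L u)"
  by (simp add: lin_on_def)
lemma lo_0: "lin_on S L \<Longrightarrow> lin_subspace S \<Longrightarrow> L 0 = 0"
  using lo_scale[of S L 0 0] ls_0[of S] by simp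
lemma lo_neg: "lin_on S L \<Longrightarrow> u \<in> S \<Longrightarrow> L (- u) = - L u"
  using lo_scale[of S L u "-1"] by simp
lemma lo_diff: "lin_on S L \<Longrightarrow> lin_subspace S \<Longrightarrow> u \<in> S \<Longrightarrow> v \<in> S \<Longrightarrow> L (u - v) = L u - L v"
  using lo_add[of S L u "- v"] lo_neg[of S L v] ls_neg[of S v] by simp

lemma grp_aux1: "(w::'a::ab_group_add) = c + a \<Longrightarrow> ws = c + b \<Longrightarrow> d = a - b \<Longrightarrow> (w - ws) - d = 0"
  by simp
lemma grp_aux2: "(ws::'a::ab_group_add) = c + a \<Longrightarrow> lz = c + b \<Longrightarrow> d = a - b \<Longrightarrow> (ws - zs) - d = lz - zs"
  by (simp add: algebra_simps)

lemma shift_diff: "shift tau h (u - v) = shift tau h u - shift tau h v"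
  by (auto simp: shift_def fun_eq_iff)

lemma op_bdd:
  assumes "bounded_op S n1 n2 L" "\<forall>x\<in>S. 0 \<le> n1 x"
  shows "bdd_above ((\<lambda>x. n2 (L x)) ` {x\<in>S. n1 x \<le> 1})"
proof -
  obtain K where K: "\<forall>x\<in>S. n2 (L x) \<le> K * n1 x" using assms(1) by (auto simp: bounded_op_def)
  have "n2 (L x) \<le> max K 0" if "x \<in> S" "n1 x \<le> 1" for x
  proof -
    have "n2 (L x) \<le> K * n1 x" using K that by auto
    also have "\<dots> \<le> max K 0 * n1 x" using assms(2) that by (intro mult_right_mono) auto
    also have "\<dots> \<le> max K 0 * 1" using that by (intro mult_left_mono) auto
    finally show ?thesis by simp
  qed
  then show ?thesis by (intro bdd_aboveI[where M="max K 0"]) auto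
qed

lemma op_norm_bound:
  assumes S: "lin_subspace S" "is_norm_on S n1" and T: "lin_subspace T" "is_norm_on T n2"
    and L: "maps_into S T L" "lin_on S L" "bounded_op S n1 n2 L" and x: "x \<in> S"
  shows "n2 (L x) \<le> op_norm S n1 n2 L * n1 x"
proof (cases "n1 x = 0")
  case True
  then have "x = 0" using nrm_eq0[OF S(2) x] by simp
  then show ?thesis using lo_0[OF L(2) S(1)] nrm_0[OF T(2) T(1)] True by simp
next
  case False
  then have pos: "n1 x > 0" using nrm_nonneg[OF S(2) x] by simp
  define y where "y = fscale (1 / n1 x) x"
  have y: "y \<in> S" using ls_scale[OF S(1) x] y_def by simp
  have ny: "n1 y = 1" using nrm_scale[OF S(2) x] pos y_def by simp
  have Ly: "n2 (L y) = n2 (L x) / n1 x"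
    using lo_scale[OF L(2) x] nrm_scale[OF T(2)] L(1) x pos y_def by (simp add: maps_into_def)
  have "n2 (L y) \<le> op_norm S n1 n2 L"
    unfolding op_norm_def
    by (rule cSup_upper) (use y ny op_bdd[OF L(3)] nrm_nonneg[OF S(2)] in auto)
  then show ?thesis using Ly pos by (simp add: field_simps)
qed

lemma op_norm_le:
  assumes "0 \<in> S" "n1 0 = 0" "K \<ge> 0" "\<forall>x\<in>S. n2 (L x) \<le> K * n1 x" "\<forall>x\<in>S. 0 \<le> n2 (L x)"
  shows "0 \<le> op_norm S n1 n2 L \<and> op_norm S n1 n2 L \<le> K"
proof
  have b: "n2 (L x) \<le> K" if "x \<in> S" "n1 x \<le> 1" for x
  proof -
    have "n2 (L x) \<le> K * n1 x" using assms that by auto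
    also have "\<dots> \<le> K * 1" using that assms by (intro mult_left_mono) auto
    finally show ?thesis by simp
  qed
  have ne: "(\<lambda>x. n2 (L x)) ` {x\<in>S. n1 x \<le> 1} \<noteq> {}" using assms by auto
  show "op_norm S n1 n2 L \<le> K" unfolding op_norm_def
    by (rule cSup_least[OF ne]) (use b in auto)
  have "n2 (L 0) \<le> op_norm S n1 n2 L" unfolding op_norm_def
    by (rule cSup_upper) (use assms b in \<open>auto intro!: bdd_aboveI[where M=K]\<close>)
  then show "0 \<le> op_norm S n1 n2 L" using assms by fastforce
qed

lemma op_norm_nonneg:
  assumes "bounded_op S n1 n2 L" "0 \<in> S" "n1 0 = 0" "\<forall>x\<in>S. 0 \<le> n1 x" "\<forall>x\<in>S. 0 \<le> n2 (L x)"
  shows "0 \<le> op_norm S n1 n2 L"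
proof -
  have "n2 (L 0) \<le> op_norm S n1 n2 L" unfolding op_norm_def
    by (rule cSup_upper) (use assms op_bdd[OF assms(1)] in auto)
  then show ?thesis using assms by fastforce
qed

theorem proposition4p7:
  fixes tau h c1 c2 :: real
    and X Xp Xpm Xt Xhp Xh :: "('d::finite) fn set"
    and nX nXp nXpm nXhp nXh :: "'d fn \<Rightarrow> real"
    and V :: "'d fn \<Rightarrow> 'd fn \<Rightarrow> 'd fn"
    and Fs :: "'d fn \<Rightarrow> 'd fn"
    and XN :: "nat \<Rightarrow> 'n::real_vector set"
    and R :: "nat \<Rightarrow> 'd fn \<Rightarrow> 'n"
    and P :: "nat \<Rightarrow> 'n \<Rightarrow> 'd fn"
  assumes tau_pos: "tau > 0" and h_ge: "h \<ge> tau"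
    and X_sp: "fun_normed_space (-tau) 0 X nX"
    and Xp_sp: "fun_normed_space 0 h Xp nXp"
    and Xpm_sp: "fun_normed_space (-tau) h Xpm nXpm"
    and V_into: "\<forall>\<phi>\<in>X. \<forall>z\<in>Xp. V \<phi> z \<in> Xpm"
    and V_add: "\<forall>\<phi>1\<in>X. \<forall>\<phi>2\<in>X. \<forall>z1\<in>Xp. \<forall>z2\<in>Xp.
                  V (fadd \<phi>1 \<phi>2) (fadd z1 z2) = fadd (V \<phi>1 z1) (V \<phi>2 z2)"
    and V_scale: "\<forall>c. \<forall>\<phi>\<in>X. \<forall>z\<in>Xp. V (fscale c \<phi>) (fscale c z) = fscale c (V \<phi> z)"
    and V_restr: "\<forall>\<phi>\<in>X. \<forall>z\<in>Xp. \<forall>\<theta>\<in>{-tau..0}. V \<phi> z \<theta> = \<phi> \<theta>"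
    and Fs_into: "maps_into Xpm Xp Fs" and Fs_lin: "lin_on Xpm Fs"
    and Xt_sub: "lin_subspace Xt" "Xt \<subseteq> Xp"
    and XN_fd: "\<forall>N. subspace (XN N) \<and> (\<exists>B. finite B \<and> span B = XN N)"
    and R_into: "\<forall>N. maps_into Xt (XN N) (R N)"
    and R_lin: "\<forall>N. (\<forall>u\<in>Xt. \<forall>v\<in>Xt. R N (fadd u v) = R N u + R N v) \<and>
                    (\<forall>c. \<forall>u\<in>Xt. R N (fscale c u) = c *\<^sub>R R N u)"
    and P_into: "\<forall>N. maps_into (XN N) Xp (P N)"
    and P_lin: "\<forall>N. (\<forall>x\<in>XN N. \<forall>y\<in>XN N. P N (x + y) = fadd (P N x) (P N y)) \<and>
                    (\<forall>c. \<forall>x\<in>XN N. P N (c *\<^sub>R x) = fscale c (P N x))"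
    and RP: "\<forall>N. \<forall>x\<in>XN N. R N (P N x) = x"
    and H1_inv: "\<exists>G. maps_into Xp Xp G \<and> bounded_op Xp nXp nXp G \<and>
                    (\<forall>z\<in>Xp. G (fdiff z (Fs (V fzero z))) = z \<and>
                              fdiff (G z) (Fs (V fzero (G z))) = z)"
    and H1_uniq: "\<forall>\<phi>\<in>X. \<exists>!z. z \<in> Xp \<and> z = Fs (V \<phi> z)"
    and Xhp_sp: "lin_subspace Xhp" "Xhp \<subseteq> Xt" "is_norm_on Xhp nXhp" "complete_on Xhp nXhp"
    and H21: "op_norm_to_zero Xhp nXhp nXp (\<lambda>N u. fdiff (P N (R N u)) u)"
    and H22: "\<forall>N. P N ` XN N \<subseteq> Xhp"
    and H23: "c1 > 0" "\<forall>u\<in>Xhp. nXp u \<le> c1 * nXhp u"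
    and H24: "maps_into Xp Xhp (\<lambda>z. Fs (V fzero z))"
             "bounded_op Xp nXp nXhp (\<lambda>z. Fs (V fzero z))"
    and Xh_sp: "lin_subspace Xh" "Xh \<subseteq> X" "is_norm_on Xh nXh" "complete_on Xh nXh"
    and H31: "maps_into Xh Xhp (\<lambda>\<phi>. Fs (V \<phi> fzero))"
             "bounded_op Xh nXh nXhp (\<lambda>\<phi>. Fs (V \<phi> fzero))"
    and H32: "\<forall>\<phi>\<in>Xh. \<forall>z\<in>Xhp. shift tau h (V \<phi> z) \<in> Xh"
    and H33: "c2 > 0" "\<forall>z\<in>Xhp. nXh (shift tau h (V fzero z)) \<le> c2 * nXp z"
  shows "op_norm_to_zero Xh nXh nXh
           (\<lambda>N \<phi>. fdiff (opTN tau h Xp V Fs (\<lambda>u. P N (R N u)) \<phi>) (opT tau h Xp V Fs \<phi>))"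
proof -
  have lsX: "lin_subspace X" and nX: "is_norm_on X nX" using X_sp by (auto simp: fun_normed_space_def)
  have lsXp: "lin_subspace Xp" and nXp: "is_norm_on Xp nXp" using Xp_sp by (auto simp: fun_normed_space_def)
  have lsXpm: "lin_subspace Xpm" using Xpm_sp by (auto simp: fun_normed_space_def)
  note lsXt = Xt_sub(1)
  note lsXhp = Xhp_sp(1) and nXhp = Xhp_sp(3)
  note lsXh = Xh_sp(1) and nXh = Xh_sp(3)
  have Xhp_Xp: "Xhp \<subseteq> Xp" using Xhp_sp(2) Xt_sub(2) by auto
  have Xhp_Xt: "Xhp \<subseteq> Xt" using Xhp_sp(2) by auto
  have Xh_X: "Xh \<subseteq> X" using Xh_sp(2) by auto
  have X0: "0 \<in> X" and Xp0: "0 \<in> Xp" and Xh0: "0 \<in> Xh" and Xhp0: "0 \<in> Xhp"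
    using ls_0 lsX lsXp lsXh lsXhp by auto
  have Vadd: "V (a + b) (u + v) = V a u + V b v" if "a \<in> X" "b \<in> X" "u \<in> Xp" "v \<in> Xp" for a b u v
    using V_add that by simp
  have Vin: "V a u \<in> Xpm" if "a \<in> X" "u \<in> Xp" for a u using V_into that by auto
  have Fsadd: "Fs (u + v) = Fs u + Fs v" if "u \<in> Xpm" "v \<in> Xpm" for u v
    using lo_add[OF Fs_lin] that by simp
  define A where "A = (\<lambda>z. Fs (V 0 z))"
  define Bm where "Bm = (\<lambda>\<phi>. Fs (V \<phi> 0))"
  define Ln where "Ln = (\<lambda>N u. P N (R N u))"
  define E where "E = (\<lambda>N u. Ln N u - u)"
  define eps where "eps = (\<lambda>N. op_norm Xhp nXhp nXp (E N))"
  have Fdec: "Fs (V \<phi> z) = Bm \<phi> + A z" if "\<phi> \<in> X" "z \<in> Xp" for \<phi> z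
  proof -
    have "V \<phi> z = V (\<phi> + 0) (0 + z)" by simp
    also have "\<dots> = V \<phi> 0 + V 0 z" using Vadd that X0 Xp0 by blast
    finally show ?thesis unfolding A_def Bm_def using Fsadd Vin that X0 Xp0 by simp
  qed
  have Vdiff: "V \<phi> z1 - V \<phi> z2 = V 0 (z1 - z2)" if "\<phi> \<in> X" "z1 \<in> Xp" "z2 \<in> Xp" for \<phi> z1 z2
  proof -
    have "V \<phi> z1 = V (\<phi> + 0) (z2 + (z1 - z2))" by simp
    also have "\<dots> = V \<phi> z2 + V 0 (z1 - z2)" using Vadd that X0 ls_diff[OF lsXp] by blast
    finally show ?thesis by simp
  qed
  have A_lin: "lin_on Xp A"
    unfolding lin_on_def
  proof (intro conjI ballI allI)
    fix u v assume uv: "u \<in> Xp" "v \<in> Xp"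
    have "V 0 (u + v) = V (0 + 0) (u + v)" by simp
    also have "\<dots> = V 0 u + V 0 v" using Vadd uv X0 by blast
    finally show "A (fadd u v) = fadd (A u) (A v)" unfolding A_def using Fsadd Vin uv X0 by simp
  next
    fix c u assume u: "u \<in> Xp"
    have "V 0 (fscale c u) = V (fscale c 0) (fscale c u)" by simp
    also have "\<dots> = fscale c (V 0 u)" using V_scale[rule_format, OF X0 u] by simp
    finally show "A (fscale c u) = fscale c (A u)" unfolding A_def
      using lo_scale[OF Fs_lin] Vin u X0 by simp
  qed
  have A_in: "A z \<in> Xhp" if "z \<in> Xp" for z using H24(1) that by (auto simp: maps_into_def A_def)
  have A_t: "A z \<in> Xt" if "z \<in> Xp" for z using A_in[OF that] Xhp_Xt by blast
  have A_p: "A z \<in> Xp" if "z \<in> Xp" for z using A_in[OF that] Xhp_Xp by blast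
  have Bm_in: "Bm \<phi> \<in> Xhp" if "\<phi> \<in> Xh" for \<phi> using H31(1) that by (auto simp: maps_into_def Bm_def)
  have Bm_t: "Bm \<phi> \<in> Xt" if "\<phi> \<in> Xh" for \<phi> using Bm_in[OF that] Xhp_Xt by blast
  have Bm_p: "Bm \<phi> \<in> Xp" if "\<phi> \<in> Xh" for \<phi> using Bm_in[OF that] Xhp_Xp by blast
  obtain KA where KA: "KA \<ge> 0" "\<forall>z\<in>Xp. nXhp (A z) \<le> KA * nXp z"
  proof -
    obtain K where K: "\<forall>z\<in>Xp. nXhp (A z) \<le> K * nXp z" using H24(2) by (auto simp: bounded_op_def A_def)
    have "nXhp (A z) \<le> max K 0 * nXp z" if "z \<in> Xp" for z
      using K that mult_right_mono[of K "max K 0" "nXp z"] nrm_nonneg[OF nXp that] by force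
    then show ?thesis using that[of "max K 0"] by auto
  qed
  obtain KB where KB: "KB \<ge> 0" "\<forall>\<phi>\<in>Xh. nXhp (Bm \<phi>) \<le> KB * nXh \<phi>"
  proof -
    obtain K where K: "\<forall>z\<in>Xh. nXhp (Bm z) \<le> K * nXh z" using H31(2) by (auto simp: bounded_op_def Bm_def)
    have "nXhp (Bm z) \<le> max K 0 * nXh z" if "z \<in> Xh" for z
      using K that mult_right_mono[of K "max K 0" "nXh z"] nrm_nonneg[OF nXh that] by force
    then show ?thesis using that[of "max K 0"] by auto
  qed
  obtain G KG where KG: "KG \<ge> 0" "\<forall>y\<in>Xp. nXp (G y) \<le> KG * nXp y" "\<forall>z\<in>Xp. G (z - A z) = z"
  proof -
    obtain G where G: "maps_into Xp Xp G" "bounded_op Xp nXp nXp G" "\<forall>z\<in>Xp. G (z - A z) = z"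
      using H1_inv by (auto simp: A_def)
    obtain K where K: "\<forall>z\<in>Xp. nXp (G z) \<le> K * nXp z" using G(2) by (auto simp: bounded_op_def)
    have "nXp (G z) \<le> max K 0 * nXp z" if "z \<in> Xp" for z
      using K that mult_right_mono[of K "max K 0" "nXp z"] nrm_nonneg[OF nXp that] by force
    then show ?thesis using that[of "max K 0" G] G(3) by auto
  qed
  have R_lin': "R N (u + v) = R N u + R N v" "R N (fscale c u) = c *\<^sub>R R N u"
    if "u \<in> Xt" "v \<in> Xt" for N u v c using R_lin that by auto
  have R_sc: "R N (fscale c u) = c *\<^sub>R R N u" if "u \<in> Xt" for N u c using R_lin that by auto
  have P_sc: "P N (c *\<^sub>R x) = fscale c (P N x)" if "x \<in> XN N" for N x c using P_lin that by auto
  have R_in: "R N u \<in> XN N" if "u \<in> Xt" for N u using R_into that by (auto simp: maps_into_def)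
  have P_lin': "P N (x + y) = P N x + P N y" "P N (c *\<^sub>R x) = fscale c (P N x)"
    if "x \<in> XN N" "y \<in> XN N" for N x y c using P_lin that by auto
  have P_in: "P N x \<in> Xhp" if "x \<in> XN N" for N x using H22 that by auto
  have Ln_in: "Ln N u \<in> Xhp" if "u \<in> Xt" for N u using P_in R_in that Ln_def by auto
  have Ln_lin: "lin_on Xt (Ln N)" for N
    unfolding lin_on_def Ln_def using R_lin' P_lin' R_sc P_sc R_in XN_fd
    by (auto simp: subspace_add subspace_scale)
  have E_lin: "lin_on Xhp (E N)" for N
    unfolding lin_on_def E_def fops
  proof (intro conjI ballI allI)
    fix u v assume "u \<in> Xhp" "v \<in> Xhp"
    then show "Ln N (u + v) - (u + v) = Ln N u - u + (Ln N v - v)"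
      using lo_add[OF Ln_lin] Xhp_Xt by auto
  next
    fix c u assume "u \<in> Xhp"
    then show "Ln N (fscale c u) - fscale c u = fscale c (Ln N u - u)"
      using lo_scale[OF Ln_lin] Xhp_Xt by auto
  qed
  have E_into: "maps_into Xhp Xp (E N)" for N
    unfolding maps_into_def E_def using Ln_in Xhp_Xt Xhp_Xp ls_diff[OF lsXp] by blast
  have H21': "op_norm_to_zero Xhp nXhp nXp E" using H21 by (simp add: E_def Ln_def)
  then have ev_b: "eventually (\<lambda>N. bounded_op Xhp nXhp nXp (E N)) sequentially"
    and eps0: "eps \<longlonglongrightarrow> 0" by (auto simp: op_norm_to_zero_def eps_def)
  have "eventually (\<lambda>N. eps N * (KA * KG) < 1/2) sequentially"
    using order_tendstoD(2)[OF tendsto_mult_left_zero[OF eps0, of "KA * KG"], of "1/2"] by simp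
  with ev_b have "eventually (\<lambda>N. bounded_op Xhp nXhp nXp (E N) \<and> eps N * (KA * KG) < 1/2) sequentially"
    by (rule eventually_conj)
  then obtain N0 where N0: "\<forall>N\<ge>N0. bounded_op Xhp nXhp nXp (E N) \<and> eps N * (KA * KG) < 1/2"
    by (auto simp: eventually_sequentially)
  define C0 where "C0 = KB + KA * KG * c1 * KB"
  define Kf where "Kf = (\<lambda>N. 2 * c2 * KG * C0 * eps N)"
  have C0: "C0 \<ge> 0" using KA KB KG H23 by (simp add: C0_def)
  have main: "opTN tau h Xp V Fs (Ln N) \<phi> - opT tau h Xp V Fs \<phi> \<in> Xh \<and>
      nXh (opTN tau h Xp V Fs (Ln N) \<phi> - opT tau h Xp V Fs \<phi>) \<le> Kf N * nXh \<phi> \<and> 0 \<le> eps N"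
    if N: "N \<ge> N0" and phi: "\<phi> \<in> Xh" for N \<phi>
  proof -
    have bN: "bounded_op Xhp nXhp nXp (E N)" and small: "eps N * (KA * KG) < 1/2" using N0 N by auto
    have epsN: "nXp (E N u) \<le> eps N * nXhp u" if "u \<in> Xhp" for u
      using op_norm_bound[OF lsXhp nXhp lsXp nXp E_into E_lin bN that] eps_def by simp
    have eps_nn: "0 \<le> eps N"
      unfolding eps_def
      by (rule op_norm_nonneg)
         (use bN Xhp0 nrm_0[OF nXhp lsXhp] nrm_nonneg[OF nXhp] nrm_nonneg[OF nXp] E_into in \<open>auto simp: maps_into_def\<close>)
    have phiX: "\<phi> \<in> X" using phi Xh_X by auto
    have AP: "nXp e \<le> 2 * KG * nXp (e - Ln N (A e))" if e: "e \<in> Xp" for e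
    proof -
      have Ae: "A e \<in> Xhp" using A_in e by auto
      have LAe: "Ln N (A e) \<in> Xp" using Ln_in Ae Xhp_Xt Xhp_Xp by auto
      have d1: "e - A e = (e - Ln N (A e)) + E N (A e)" by (simp add: E_def)
      have m1: "e - Ln N (A e) \<in> Xp" using ls_diff[OF lsXp e LAe] .
      have m2: "E N (A e) \<in> Xp" using E_into Ae by (auto simp: maps_into_def)
      have "nXp e = nXp (G (e - A e))" using KG(3) e by simp
      also have "\<dots> \<le> KG * nXp (e - A e)" using KG(2) ls_diff[OF lsXp e] Ae Xhp_Xp by auto
      also have "\<dots> \<le> KG * (nXp (e - Ln N (A e)) + nXp (E N (A e)))"
        unfolding d1 using nrm_add[OF nXp m1 m2] KG(1) by (intro mult_left_mono) auto
      also have "\<dots> \<le> KG * (nXp (e - Ln N (A e)) + eps N * (KA * nXp e))"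
      proof -
        have "nXp (E N (A e)) \<le> eps N * nXhp (A e)" using epsN Ae by auto
        also have "\<dots> \<le> eps N * (KA * nXp e)" using KA e eps_nn by (intro mult_left_mono) auto
        finally show ?thesis using KG(1) by (intro mult_left_mono) auto
      qed
      also have "\<dots> = KG * nXp (e - Ln N (A e)) + (eps N * (KA * KG)) * nXp e"
        by (simp add: algebra_simps)
      also have "\<dots> \<le> KG * nXp (e - Ln N (A e)) + (1/2) * nXp e"
        using small nrm_nonneg[OF nXp e] by (intro add_left_mono mult_right_mono) auto
      finally show ?thesis by simp
    qed
    obtain zs where zs: "zs \<in> Xp" "zs = Fs (V \<phi> zs)" using H1_uniq phiX by blast
    have Tzs: "(THE z. z \<in> Xp \<and> z = Fs (V \<phi> z)) = zs"
      by (rule the1_equality) (use H1_uniq phiX zs in auto)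
    have zs2: "zs = Bm \<phi> + A zs" using trans[OF zs(2) Fdec[OF phiX zs(1)]] .
    obtain ws where ws: "ws \<in> Xp" "ws = Ln N (Fs (V \<phi> ws))"
    proof -
      define g where "g = (\<lambda>x. x - R N (A (P N x)))"
      have sub: "subspace (XN N)" and fin: "\<exists>B. finite B \<and> span B = XN N" using XN_fd by auto
      have PXp: "P N x \<in> Xp" if "x \<in> XN N" for x using P_in that Xhp_Xp by auto
      have RAP: "R N (A (P N x)) \<in> XN N" if "x \<in> XN N" for x
        using R_in[OF subsetD[OF Xhp_Xt A_in[OF PXp[OF that]]]] .
      have "\<exists>x\<in>XN N. g x = R N (Bm \<phi>)"
      proof -
        obtain B where B: "finite B" "span B = XN N" using fin by auto
        show ?thesis
        proof (rule fd_surj[OF sub B])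
          show "\<forall>x\<in>XN N. g x \<in> XN N" unfolding g_def using RAP sub by (auto simp: subspace_diff)
          show "\<forall>x\<in>XN N. \<forall>y\<in>XN N. g (x + y) = g x + g y"
          proof (intro ballI)
            fix x y assume xy: "x \<in> XN N" "y \<in> XN N"
            have "A (P N (x + y)) = A (P N x) + A (P N y)"
              using P_lin'(1)[OF xy] lo_add[OF A_lin] PXp xy by auto
            then have "R N (A (P N (x + y))) = R N (A (P N x)) + R N (A (P N y))"
              using R_lin'(1)[OF A_t[OF PXp[OF xy(1)]] A_t[OF PXp[OF xy(2)]]] by simp
            then show "g (x + y) = g x + g y" unfolding g_def by (simp add: algebra_simps)
          qed
          show "\<forall>c. \<forall>x\<in>XN N. g (c *\<^sub>R x) = c *\<^sub>R g x"
          proof (intro allI ballI)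
            fix c x assume x: "x \<in> XN N"
            have "A (P N (c *\<^sub>R x)) = fscale c (A (P N x))"
              using P_sc[OF x] lo_scale[OF A_lin] PXp x by auto
            then have "R N (A (P N (c *\<^sub>R x))) = c *\<^sub>R R N (A (P N x))"
              using R_sc[OF A_t[OF PXp[OF x]]] by simp
            then show "g (c *\<^sub>R x) = c *\<^sub>R g x" unfolding g_def by (simp add: algebra_simps)
          qed
          show "\<forall>x\<in>XN N. g x = 0 \<longrightarrow> x = 0"
          proof (intro ballI impI)
            fix x assume x: "x \<in> XN N" and g0: "g x = 0"
            then have xe: "x = R N (A (P N x))" unfolding g_def by simp
            have "Ln N (A (P N x)) = P N x" unfolding Ln_def using xe by simp
            then have "nXp (P N x) \<le> 2 * KG * nXp 0" using AP[OF PXp[OF x]] by simp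
            then have "nXp (P N x) = 0" using nrm_0[OF nXp lsXp] nrm_nonneg[OF nXp PXp[OF x]] by simp
            then have "P N x = 0" using nrm_eq0[OF nXp PXp[OF x]] by simp
            moreover have "R N 0 = 0" using R_sc[of 0 N 0] ls_0[OF lsXt] by simp
            ultimately show "x = 0" using RP x by metis
          qed
          show "R N (Bm \<phi>) \<in> XN N" using R_in Bm_in phi Xhp_Xt by auto
        qed
      qed
      then obtain x where x: "x \<in> XN N" "x - R N (A (P N x)) = R N (Bm \<phi>)" unfolding g_def by auto
      have "Ln N (Fs (V \<phi> (P N x))) = P N x"
      proof -
        have "Fs (V \<phi> (P N x)) = Bm \<phi> + A (P N x)" using Fdec phiX PXp x by auto
        then have "R N (Fs (V \<phi> (P N x))) = R N (Bm \<phi>) + R N (A (P N x))"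
          using R_lin'(1)[OF Bm_t[OF phi] A_t[OF PXp[OF x(1)]]] by simp
        also have "\<dots> = x" using x(2) by (simp add: algebra_simps)
        finally show ?thesis unfolding Ln_def by simp
      qed
      then show ?thesis using that[of "P N x"] PXp x by auto
    qed
    have ws_uniq: "w = ws" if w: "w \<in> Xp" "w = Ln N (Fs (V \<phi> w))" for w
    proof -
      have dec: "u = Ln N (Bm \<phi>) + Ln N (A u)" if "u \<in> Xp" "u = Ln N (Fs (V \<phi> u))" for u
        using that(2) Fdec[OF phiX that(1)] lo_add[OF Ln_lin Bm_t[OF phi] A_t[OF that(1)]] by simp
      have e: "w - ws \<in> Xp" using ls_diff[OF lsXp w(1) ws(1)] .
      have "Ln N (A (w - ws)) = Ln N (A w) - Ln N (A ws)"
        using lo_diff[OF A_lin lsXp w(1) ws(1)] lo_diff[OF Ln_lin lsXt A_t[OF w(1)] A_t[OF ws(1)]] by simp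
      then have "(w - ws) - Ln N (A (w - ws)) = 0"
        using grp_aux1[OF dec[OF w] dec[OF ws]] by blast
      then have "nXp (w - ws) \<le> 0" using AP[OF e] nrm_0[OF nXp lsXp] by simp
      then have "w - ws = 0" using nrm_eq0[OF nXp e] nrm_nonneg[OF nXp e] by simp
      then show ?thesis by simp
    qed
    have Tws: "(THE w. w \<in> Xp \<and> w = Ln N (Fs (V \<phi> w))) = ws"
      by (rule the1_equality) (use ws ws_uniq in blast)+
    have "Fs (V \<phi> ws) \<in> Xt" using Fdec[OF phiX ws(1)] ls_add[OF lsXhp Bm_in[OF phi] A_in[OF ws(1)]] Xhp_Xt by auto
    then have ws_hp: "ws \<in> Xhp" using ws(2) Ln_in by metis
    have zs_hp: "zs \<in> Xhp" by (subst zs2) (rule ls_add[OF lsXhp Bm_in[OF phi] A_in[OF zs(1)]])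
    define e where "e = ws - zs"
    have e_hp: "e \<in> Xhp" using ls_diff[OF lsXhp ws_hp zs_hp] e_def by simp
    have e_p: "e \<in> Xp" using e_hp Xhp_Xp by auto
    have key: "e - Ln N (A e) = E N zs"
    proof -
      have "Ln N (A e) = Ln N (A ws) - Ln N (A zs)"
        using lo_diff[OF A_lin lsXp ws(1) zs(1)] lo_diff[OF Ln_lin lsXt A_t[OF ws(1)] A_t[OF zs(1)]] e_def by simp
      moreover have "ws = Ln N (Bm \<phi>) + Ln N (A ws)"
        using ws(2) Fdec[OF phiX ws(1)] lo_add[OF Ln_lin Bm_t[OF phi] A_t[OF ws(1)]] by simp
      moreover have "Ln N zs = Ln N (Bm \<phi>) + Ln N (A zs)"
        using lo_add[OF Ln_lin Bm_t[OF phi] A_t[OF zs(1)]] zs2 by metis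
      ultimately show ?thesis unfolding E_def e_def using grp_aux2 by blast
    qed
    have ne: "nXp e \<le> 2 * KG * (eps N * nXhp zs)"
    proof -
      have "nXp e \<le> 2 * KG * nXp (E N zs)" using AP[OF e_p] key by simp
      also have "\<dots> \<le> 2 * KG * (eps N * nXhp zs)" using epsN[OF zs_hp] KG(1) by (intro mult_left_mono) auto
      finally show ?thesis .
    qed
    have nzs_p: "nXp zs \<le> KG * (c1 * (KB * nXh \<phi>))"
    proof -
      have "nXp zs = nXp (G (zs - A zs))" using KG(3) zs(1) by simp
      also have "\<dots> = nXp (G (Bm \<phi>))" using zs2 unfolding diff_eq_eq[symmetric] by simp
      also have "\<dots> \<le> KG * nXp (Bm \<phi>)" using KG(2) Bm_in[OF phi] Xhp_Xp by auto
      also have "\<dots> \<le> KG * (c1 * nXhp (Bm \<phi>))" using H23(2) Bm_in[OF phi] KG(1) by (intro mult_left_mono) auto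
      also have "\<dots> \<le> KG * (c1 * (KB * nXh \<phi>))" using KB(2) phi KG(1) H23(1)
        by (intro mult_left_mono) auto
      finally show ?thesis .
    qed
    have nzs: "nXhp zs \<le> C0 * nXh \<phi>"
    proof -
      have "nXhp zs \<le> nXhp (Bm \<phi>) + nXhp (A zs)" using zs2 nrm_add[OF nXhp Bm_in[OF phi] A_in[OF zs(1)]] by metis
      also have "\<dots> \<le> KB * nXh \<phi> + KA * nXp zs" using KB(2) KA(2) phi zs(1) by (intro add_mono) auto
      also have "\<dots> \<le> KB * nXh \<phi> + KA * (KG * (c1 * (KB * nXh \<phi>)))"
        using nzs_p KA(1) by (intro add_left_mono mult_left_mono) auto
      also have "\<dots> = C0 * nXh \<phi>" by (simp add: C0_def algebra_simps)
      finally show ?thesis .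
    qed
    have D: "opTN tau h Xp V Fs (Ln N) \<phi> - opT tau h Xp V Fs \<phi> = shift tau h (V 0 e)"
      unfolding opTN_def opT_def Tws Tzs using shift_diff Vdiff[OF phiX ws(1) zs(1)] e_def by metis
    have "nXh (shift tau h (V 0 e)) \<le> c2 * nXp e" using H33(2) e_hp by simp
    also have "\<dots> \<le> c2 * (2 * KG * (eps N * (C0 * nXh \<phi>)))"
      using ne nzs H33(1) KG(1) eps_nn
      by (intro mult_left_mono order.trans[OF ne]) auto
    also have "\<dots> = Kf N * nXh \<phi>" by (simp add: Kf_def)
    finally have bnd: "nXh (shift tau h (V 0 e)) \<le> Kf N * nXh \<phi>" .
    have inXh: "shift tau h (V 0 e) \<in> Xh" using H32 Xh0 e_hp by simp
    show ?thesis using D bnd inXh eps_nn by simp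
  qed
  let ?D = "\<lambda>N \<phi>. opTN tau h Xp V Fs (Ln N) \<phi> - opT tau h Xp V Fs \<phi>"
  have opb: "0 \<le> op_norm Xh nXh nXh (?D N) \<and> op_norm Xh nXh nXh (?D N) \<le> Kf N" if N: "N \<ge> N0" for N
  proof -
    have "0 \<le> eps N" using main[OF N Xh0] by simp
    then have k0: "0 \<le> Kf N" using KG(1) C0 H33(1) by (simp add: Kf_def)
    have b1: "\<forall>x\<in>Xh. nXh (?D N x) \<le> Kf N * nXh x" using main N by blast
    have b2: "\<forall>x\<in>Xh. 0 \<le> nXh (?D N x)" using main N nrm_nonneg[OF nXh] by blast
    show ?thesis using op_norm_le[of Xh nXh "Kf N" nXh "?D N", OF Xh0 nrm_0[OF nXh lsXh] k0 b1 b2] .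
  qed
  have "eventually (\<lambda>N. bounded_op Xh nXh nXh (?D N)) sequentially"
    unfolding eventually_sequentially bounded_op_def using main by blast
  moreover have "(\<lambda>N. op_norm Xh nXh nXh (?D N)) \<longlonglongrightarrow> 0"
  proof (rule real_tendsto_sandwich[where f="\<lambda>_. 0" and h=Kf])
    show "\<forall>\<^sub>F n in sequentially. 0 \<le> op_norm Xh nXh nXh (?D n)"
      unfolding eventually_sequentially using opb by blast
    show "\<forall>\<^sub>F n in sequentially. op_norm Xh nXh nXh (?D n) \<le> Kf n"
      unfolding eventually_sequentially using opb by blast
    show "(\<lambda>_. 0::real) \<longlonglongrightarrow> 0" by simp
    have "(\<lambda>N. eps N * (2 * c2 * KG * C0)) \<longlonglongrightarrow> 0" by (rule tendsto_mult_left_zero[OF eps0])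
    then show "Kf \<longlonglongrightarrow> 0" unfolding Kf_def by (simp add: mult.commute mult.left_commute)
  qed
  ultimately show ?thesis unfolding op_norm_to_zero_def Ln_def by simp
qed

end
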